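(* For all nonnegative integers $k,d,i,j$ with $k>0$, $$F_{\,kd+id+j(i+1)(2(k-1)d+1),\;d+j(2(k-1)d+1)}=1.$$
   Context: Define maps $G,S:\mathbb Z^2\to\mathbb Z^2$ by $G(x,y)=(x+y,y)$ and $S(x,y)=(3x-2y+1,\,2x-y+1)$. Define the array $(F_{n,k})_{n,k\ge 0}$ by $F_{0,0}=1$ and, for $(n,k)\neq(0,0)$, $F_{n,k}$ is the number of finite words $w=w_1w_2\cdots w_m$ ($m\ge 0$) over the alphabet $\{G,S\}$ with $w_1\circ w_2\circ\cdots\circ w_m(1,1)=(n,k)$ (the empty word acts as the identity). Equivalently: start with all entries $0$, set $F_{0,0}=1$ and $F_{1,1}=1$, and thereafter, whenever an entry $F_{n,k}$ with $n\ge 1$ changes its value, increase $F_{n+k,k}$ and $F_{3n+1-2k,\,2n+1-k}$ by $1$. *)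

theory Defs
  imports Main
begin

datatype letter = G | S

fun act :: "letter \<Rightarrow> int \<times> int \<Rightarrow> int \<times> int" where
  "act G (x, y) = (x + y, y)"
| "act S (x, y) = (3*x - 2*y + 1, 2*x - y + 1)"

definition eval_word :: "letter list \<Rightarrow> int \<times> int" where
  "eval_word w = foldr act w (1, 1)"

definition F :: "nat \<Rightarrow> nat \<Rightarrow> nat" where
  "F n k = (if n = 0 \<and> k = 0 then 1
            else card {w. eval_word w = (int n, int k)})"

end

theory Submission
  imports Defs
begin

lemma inv_word: "eval_word w = (x, y) \<Longrightarrow> x \<ge> y \<and> y \<ge> 1"
proof (induction w arbitrary: x y)
  case Nil
  then show ?case by (simp add: eval_word_def)
next
  case (Cons a w)
  obtain x0 y0 where e: "eval_word w = (x0, y0)" by fastforce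
  from Cons.IH[OF e] have "x0 \<ge> y0" "y0 \<ge> 1" by auto
  with Cons.prems e show ?case
    by (cases a) (auto simp: eval_word_def)
qed

lemma eval_cons: "eval_word (a # w) = act a (eval_word w)"
  by (simp add: eval_word_def)

lemma head_G: "eval_word (G # w) = (x, y) \<Longrightarrow> x \<ge> 2*y"
proof -
  assume h: "eval_word (G # w) = (x, y)"
  obtain x0 y0 where e: "eval_word w = (x0, y0)" by fastforce
  from inv_word[OF e] h e show ?thesis by (auto simp: eval_cons)
qed

lemma head_S: "eval_word (S # w) = (x, y) \<Longrightarrow> 3*y > 2*x+1"
proof -
  assume h: "eval_word (S # w) = (x, y)"
  obtain x0 y0 where e: "eval_word w = (x0, y0)" by fastforce
  from inv_word[OF e] h e show ?thesis by (auto simp: eval_cons)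
qed

lemma head_Nil: "eval_word [] = (1, 1)"
  by (simp add: eval_word_def)

lemma act_inj: "act a p = act a q \<Longrightarrow> p = q"
  by (cases a; cases p; cases q) auto

lemma eval_inj: "eval_word w = eval_word w' \<Longrightarrow> w = w'"
proof (induction w arbitrary: w')
  case Nil
  show ?case
  proof (cases w')
    case Nil then show ?thesis by simp
  next
    case (Cons b v)
    then show ?thesis using Nil.prems head_Nil head_G[of v 1 1] head_S[of v 1 1]
      by (cases b) auto
  qed
next
  case (Cons a w)
  obtain x y where xy: "eval_word (a # w) = (x, y)" by fastforce
  have y1: "y \<ge> 1" using inv_word[OF xy] by simp
  show ?case
  proof (cases w')
    case Nil
    then show ?thesis using Cons.prems xy head_Nil head_G[of w x y] head_S[of w x y]
      by (cases a) auto
  next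
    case (Cons b v)
    have xy': "eval_word (b # v) = (x, y)" using Cons.prems xy Cons by simp
    have ab: "a = b"
    proof (rule ccontr)
      assume "a \<noteq> b"
      then show False using y1 xy xy' head_G[of w x y] head_S[of w x y] head_G[of v x y] head_S[of v x y]
        by (cases a; cases b) auto
    qed
    have "eval_word w = eval_word v"
      using Cons.prems Cons ab by (auto simp: eval_cons intro: act_inj)
    then show ?thesis using Cons.IH Cons ab by simp
  qed
qed

lemma rep_G: "foldr act (replicate n G) (x, y) = (x + int n * y, y)"
  by (induction n) (auto simp del: foldr_replicate simp: algebra_simps)

lemma rep_S: "foldr act (replicate n S) (x, y) =
   (x + int n * (2*(x-y)+1), y + int n * (2*(x-y)+1))"
  by (induction n) (auto simp del: foldr_replicate simp: algebra_simps)

lemma card_one: "eval_word w0 = p \<Longrightarrow> card {w. eval_word w = p} = 1"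
proof -
  assume h: "eval_word w0 = p"
  have "{w. eval_word w = p} = {w0}" using h eval_inj by auto
  then show ?thesis by simp
qed

theorem theorem14:
  fixes k d i j :: nat
  assumes "k > 0"
  shows "F (k*d + i*d + j*(i+1)*(2*(k-1)*d+1)) (d + j*(2*(k-1)*d+1)) = 1"
proof (cases "d = 0")
  case True
  show ?thesis
  proof (cases "j = 0")
    case True
    with \<open>d = 0\<close> show ?thesis by (simp add: F_def)
  next
    case False
    then obtain j' where j': "j = Suc j'" by (cases j) auto
    have "eval_word (replicate i G @ replicate j' S) = (int (j*(i+1)), int j)"
      unfolding eval_word_def by (simp del: foldr_replicate add: rep_G rep_S j' algebra_simps)
    then show ?thesis using \<open>d = 0\<close> False unfolding F_def
      by (simp add: card_one)
  qed
next
  case False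
  then obtain d' where d': "d = Suc d'" by (cases d) auto
  obtain k' where k': "k = Suc k'" using assms by (cases k) auto
  have "eval_word (replicate i G @ replicate j S @ replicate k' G @ replicate d' S)
     = (int (k*d + i*d + j*(i+1)*(2*(k-1)*d+1)), int (d + j*(2*(k-1)*d+1)))"
    unfolding eval_word_def by (simp del: foldr_replicate add: rep_G rep_S d' k' algebra_simps)
  then show ?thesis using False unfolding F_def
    by (simp add: card_one)
qed

end
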